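(* Let $G$ be a finite Abelian group with identity $1$ and let $A=\{a_1,\ldots,a_t\}$ be a set of generators of $G$ satisfying the triangular relations $$a_1^{k_1}=1,\qquad a_i^{k_i}=a_1^{\lambda_{i,1}}\cdots a_{i-1}^{\lambda_{i,i-1}}\quad (i=2,\ldots,t),$$ where the $\lambda_{i,j}$ are nonnegative integers and, for every $i\in[t]$, $k_i\ge 2$ is the smallest positive integer such that $a_i^{k_i}\in\langle a_1,\ldots,a_{i-1}\rangle$ (for $i=1$ this subgroup is $\{1\}$). Then $G$ is isomorphic to $\Gamma(K,L)$, where $K=(k_i)$ and $L=(\lambda_{i,j})$, via the isomorphism $$\Psi(x_1^{j_1}\cdots x_t^{j_t})=a_1^{j_1}\cdots a_t^{j_t}\qquad (0\le j_i\le k_i-1,\ i\in[t]).$$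
   Context: For positive integers $k_1,\ldots,k_t$ and nonnegative integers $\lambda_{i,j}$ ($2\le i\le t$, $1\le j<i$), let $I$ be the ideal of $\mathbb{R}[x_1,\ldots,x_t]$ generated by $x_1^{k_1}-1$ and $x_i^{k_i}-x_1^{\lambda_{i,1}}\cdots x_{i-1}^{\lambda_{i,i-1}}$ ($i=2,\ldots,t$). The monomial group $\Gamma(K,L)$ is the set of residue classes in $\mathbb{R}[x_1,\ldots,x_t]/I$ of the monomials $x_1^{j_1}\cdots x_t^{j_t}$ with $0\le j_i\le k_i-1$, with the multiplication of the quotient ring (products are reduced to this form using the relations $x_1^{k_1}=1$, $x_i^{k_i}=x_1^{\lambda_{i,1}}\cdots x_{i-1}^{\lambda_{i,i-1}}$). *)

theory Defs
  imports "HOL-Algebra.Algebra" "HOL-Library.Poly_Mapping"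
begin

text \<open>Variables are indexed from 0, so x_i here is x_(i+1) of the paper.\<close>

type_synonym rpoly = "(nat \<Rightarrow>\<^sub>0 nat) \<Rightarrow>\<^sub>0 real"

definition mvar :: "nat \<Rightarrow> rpoly" where
  "mvar i = Poly_Mapping.single (Poly_Mapping.single i 1) 1"

definition mono :: "nat \<Rightarrow> (nat \<Rightarrow> nat) \<Rightarrow> rpoly" where
  "mono t j = (\<Prod>i<t. mvar i ^ j i)"

definition tri_gen :: "(nat \<Rightarrow> nat) \<Rightarrow> (nat \<Rightarrow> nat \<Rightarrow> nat) \<Rightarrow> nat \<Rightarrow> rpoly" where
  "tri_gen k lam i = mvar i ^ k i - (\<Prod>j<i. mvar j ^ lam i j)"

definition tri_ideal :: "nat \<Rightarrow> (nat \<Rightarrow> nat) \<Rightarrow> (nat \<Rightarrow> nat \<Rightarrow> nat) \<Rightarrow> rpoly set" where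
  "tri_ideal t k lam = {p. \<exists>h :: nat \<Rightarrow> rpoly. p = (\<Sum>i<t. h i * tri_gen k lam i)}"

definition cls :: "nat \<Rightarrow> (nat \<Rightarrow> nat) \<Rightarrow> (nat \<Rightarrow> nat \<Rightarrow> nat) \<Rightarrow> rpoly \<Rightarrow> rpoly set" where
  "cls t k lam p = {q. p - q \<in> tri_ideal t k lam}"

definition Gamma :: "nat \<Rightarrow> (nat \<Rightarrow> nat) \<Rightarrow> (nat \<Rightarrow> nat \<Rightarrow> nat) \<Rightarrow> rpoly set monoid" where
  "Gamma t k lam =
     \<lparr> carrier = {cls t k lam (mono t j) | j. \<forall>i<t. j i < k i},
       monoid.mult = (\<lambda>U V. cls t k lam ((SOME p. p \<in> U) * (SOME q. q \<in> V))),
       monoid.one = cls t k lam 1 \<rparr>"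

end

theory Submission
  imports Defs
begin


definition monv :: "(nat \<Rightarrow> complex) \<Rightarrow> (nat \<Rightarrow>\<^sub>0 nat) \<Rightarrow> complex" where
  "monv z m = (\<Prod>i\<in>Poly_Mapping.keys m. z i ^ Poly_Mapping.lookup m i)"

definition ev :: "(nat \<Rightarrow> complex) \<Rightarrow> rpoly \<Rightarrow> complex" where
  "ev z p = (\<Sum>m. of_real (Poly_Mapping.lookup p m) * monv z m)"

lemma monv_superset:
  assumes "finite S" "Poly_Mapping.keys m \<subseteq> S"
  shows "monv z m = (\<Prod>i\<in>S. z i ^ Poly_Mapping.lookup m i)"
  unfolding monv_def
  by (rule prod.mono_neutral_left) (use assms in \<open>auto simp: in_keys_iff\<close>)

lemma monv_add: "monv z (m + m') = monv z m * monv z m'"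
proof -
  let ?S = "Poly_Mapping.keys m \<union> Poly_Mapping.keys m'"
  have "monv z (m + m') = (\<Prod>i\<in>?S. z i ^ Poly_Mapping.lookup (m + m') i)"
    by (rule monv_superset) (auto simp: keys_add intro: subset_trans[OF Poly_Mapping.keys_add])
  also have "\<dots> = (\<Prod>i\<in>?S. z i ^ Poly_Mapping.lookup m i) * (\<Prod>i\<in>?S. z i ^ Poly_Mapping.lookup m' i)"
    by (simp add: Poly_Mapping.lookup_add power_add prod.distrib)
  also have "\<dots> = monv z m * monv z m'"
    by (subst (1 2) monv_superset[of ?S]) auto
  finally show ?thesis .
qed

lemma monv_zero: "monv z 0 = 1" by (simp add: monv_def)

lemma monv_single: "monv z (Poly_Mapping.single i 1) = z i"
  by (simp add: monv_def Poly_Mapping.lookup_single)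

lemma ev_fin: "finite {m. of_real (Poly_Mapping.lookup p m) * monv z m \<noteq> (0::complex)}"
  by (rule finite_subset[of _ "Poly_Mapping.keys p"]) (auto simp: in_keys_iff)

lemma ev_add: "ev z (p + q) = ev z p + ev z q"
  unfolding ev_def
  by (simp add: Poly_Mapping.lookup_add distrib_right Sum_any.distrib[OF ev_fin ev_fin])

lemma ev_zero: "ev z 0 = 0" by (simp add: ev_def)

lemma ev_single: "ev z (Poly_Mapping.single m c) = of_real c * monv z m"
proof -
  have "ev z (Poly_Mapping.single m c) = (\<Sum>m'. (of_real c * monv z m) when m' = m)"
    unfolding ev_def by (rule Sum_any.cong) (auto simp: lookup_single when_def)
  then show ?thesis by simp
qed

lemma update_eq: "a \<notin> Poly_Mapping.keys f \<Longrightarrow> Poly_Mapping.update a b f = Poly_Mapping.single a b + f"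
  by (rule poly_mapping_eqI) (auto simp: lookup_update lookup_add lookup_single in_keys_iff when_def)

lemma ev_single_mult: "ev z (Poly_Mapping.single m c * q) = ev z (Poly_Mapping.single m c) * ev z q"
proof (induction q rule: Poly_Mapping.update_induct)
  case const
  then show ?case by (simp add: ev_zero)
next
  case (update f a b)
  then show ?case
    by (simp add: update_eq distrib_left ev_add mult_single ev_single monv_add algebra_simps)
qed

lemma ev_mult: "ev z (p * q) = ev z p * ev z q"
proof (induction p rule: Poly_Mapping.update_induct)
  case const
  then show ?case by (simp add: ev_zero)
next
  case (update f a b)
  then show ?case
    by (simp add: update_eq distrib_right ev_add ev_single_mult)
qed

lemma ev_uminus: "ev z (- p) = - ev z p"
  using ev_add[of z p "-p"] by (simp add: ev_zero eq_neg_iff_add_eq_0 add.commute)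

lemma ev_diff: "ev z (p - q) = ev z p - ev z q"
  using ev_add[of z p "-q"] by (simp add: ev_uminus)

lemma ev_one: "ev z 1 = 1"
  using ev_single[of z 0 1] by (simp add: monv_zero)

lemma ev_power: "ev z (p ^ n) = ev z p ^ n"
  by (induction n) (simp_all add: ev_one ev_mult)

lemma ev_prod: "ev z (\<Prod>i\<in>A. f i) = (\<Prod>i\<in>A. ev z (f i))"
  by (induction A rule: infinite_finite_induct) (simp_all add: ev_one ev_mult)

lemma ev_sum: "ev z (\<Sum>i\<in>A. f i) = (\<Sum>i\<in>A. ev z (f i))"
  by (induction A rule: infinite_finite_induct) (simp_all add: ev_zero ev_add)

lemma ev_mvar: "ev z (mvar i) = z i"
  unfolding mvar_def ev_single monv_single by simp



abbreviation II where "II t k lam \<equiv> tri_ideal t k lam"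

lemma I_zero: "0 \<in> II t k lam"
  unfolding tri_ideal_def by (rule CollectI, rule exI[of _ "\<lambda>_. 0"]) simp

lemma I_add: "p \<in> II t k lam \<Longrightarrow> q \<in> II t k lam \<Longrightarrow> p + q \<in> II t k lam"
proof -
  assume "p \<in> II t k lam" "q \<in> II t k lam"
  then obtain h h' where "p = (\<Sum>i<t. h i * tri_gen k lam i)" "q = (\<Sum>i<t. h' i * tri_gen k lam i)"
    unfolding tri_ideal_def by auto
  then show ?thesis unfolding tri_ideal_def
    by (intro CollectI exI[of _ "\<lambda>i. h i + h' i"]) (simp add: distrib_right sum.distrib)
qed

lemma I_mult: "p \<in> II t k lam \<Longrightarrow> r * p \<in> II t k lam"
proof -
  assume "p \<in> II t k lam"
  then obtain h where "p = (\<Sum>i<t. h i * tri_gen k lam i)"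
    unfolding tri_ideal_def by auto
  then show ?thesis unfolding tri_ideal_def
    by (intro CollectI exI[of _ "\<lambda>i. r * h i"]) (simp add: sum_distrib_left mult.assoc)
qed

lemma I_uminus: "p \<in> II t k lam \<Longrightarrow> - p \<in> II t k lam"
  using I_mult[of p t k lam "-1"] by simp

lemma I_diff: "p \<in> II t k lam \<Longrightarrow> q \<in> II t k lam \<Longrightarrow> p - q \<in> II t k lam"
  using I_add[of p t k lam "-q"] I_uminus by auto

lemma I_gen: "i < t \<Longrightarrow> tri_gen k lam i \<in> II t k lam"
  unfolding tri_ideal_def
proof (intro CollectI exI[of _ "\<lambda>j. if j = i then 1 else 0"])
  assume "i < t"
  have "(\<Sum>j<t. (if j = i then 1 else 0) * tri_gen k lam j) = (\<Sum>j<t. if j = i then tri_gen k lam j else 0)"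
    by (rule sum.cong) auto
  also have "\<dots> = tri_gen k lam i" using \<open>i < t\<close> by simp
  finally show "tri_gen k lam i = (\<Sum>j<t. (if j = i then 1 else 0) * tri_gen k lam j)" by simp
qed

definition cg where "cg t k lam p q \<longleftrightarrow> p - q \<in> II t k lam"

lemma cg_refl: "cg t k lam p p" by (simp add: cg_def I_zero)
lemma cg_sym: "cg t k lam p q \<Longrightarrow> cg t k lam q p"
  unfolding cg_def using I_uminus by fastforce
lemma cg_trans: "cg t k lam p q \<Longrightarrow> cg t k lam q r \<Longrightarrow> cg t k lam p r"
  unfolding cg_def using I_add by fastforce
lemma cg_mult: "cg t k lam p p' \<Longrightarrow> cg t k lam q q' \<Longrightarrow> cg t k lam (p * q) (p' * q')"
proof -
  assume a: "cg t k lam p p'" "cg t k lam q q'"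
  have "p * q - p' * q' = q * (p - p') + p' * (q - q')" by (simp add: algebra_simps)
  then show ?thesis using a unfolding cg_def by (simp add: I_add I_mult)
qed
lemma cg_power: "cg t k lam p q \<Longrightarrow> cg t k lam (p ^ n) (q ^ n)"
  by (induction n) (simp_all add: cg_refl cg_mult)

lemma cg_gen: "i < t \<Longrightarrow> cg t k lam (mvar i ^ k i) (\<Prod>j<i. mvar j ^ lam i j)"
  using I_gen unfolding cg_def tri_gen_def by blast

lemma cls_eq: "cg t k lam p q \<Longrightarrow> cls t k lam p = cls t k lam q"
  unfolding cls_def using cg_trans cg_sym unfolding cg_def by blast

lemma cls_mem: "p \<in> cls t k lam p" by (simp add: cls_def I_zero)

lemma cls_memD: "q \<in> cls t k lam p \<Longrightarrow> cg t k lam p q" by (simp add: cls_def cg_def)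

definition valid :: "(nat \<Rightarrow> nat) \<Rightarrow> (nat \<Rightarrow> nat \<Rightarrow> nat) \<Rightarrow> nat \<Rightarrow> (nat \<Rightarrow> complex) \<Rightarrow> bool" where
  "valid k lam n z \<longleftrightarrow> (\<forall>l<n. z l \<noteq> 0 \<and> z l ^ k l = (\<Prod>m<l. z m ^ lam l m))"

lemma ev_I: "valid k lam t z \<Longrightarrow> p \<in> II t k lam \<Longrightarrow> ev z p = 0"
  unfolding tri_ideal_def valid_def
  by (auto simp: ev_sum ev_mult tri_gen_def ev_diff ev_power ev_prod ev_mvar)

lemma ev_cg: "valid k lam t z \<Longrightarrow> cg t k lam p q \<Longrightarrow> ev z p = ev z q"
  unfolding cg_def using ev_I ev_diff by fastforce

lemma ev_mono: "ev z (mono t j) = (\<Prod>i<t. z i ^ j i)"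
  by (simp add: mono_def ev_prod ev_power ev_mvar)

lemma croot: assumes "n > 0" "w \<noteq> 0" shows "\<exists>c::complex. c \<noteq> 0 \<and> c ^ n = w"
proof -
  let ?c = "rcis (root n (cmod w)) (Arg w / real n)"
  have "?c ^ n = rcis ((root n (cmod w)) ^ n) (Arg w)"
    using assms by (simp add: DeMoivre2)
  also have "\<dots> = w" using assms by (simp add: real_root_pow_pos2 rcis_cmod_Arg)
  finally show ?thesis using assms by (intro exI[of _ ?c]) auto
qed

lemma prim_root:
  fixes n a b :: nat
  assumes "0 < n" "a < n" "b < n" "cis (2*pi/real n) ^ a = cis (2*pi/real n) ^ b"
  shows "a = b"
proof (rule ccontr)
  assume ne: "a \<noteq> b"
  { fix a b :: nat assume ab: "a < b" "b < n" "cis (2*pi/real n) ^ a = cis (2*pi/real n) ^ b"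
    have "cis (2*pi/real n) ^ b = cis (2*pi/real n) ^ a * cis (2*pi/real n) ^ (b - a)"
      using ab by (metis le_add_diff_inverse less_imp_le power_add)
    then have "cis (2*pi/real n) ^ (b - a) = 1" using ab by (simp add: cis_neq_zero)
    then have "cis (real (b - a) * (2*pi/real n)) = 1" by (simp add: DeMoivre)
    then have "cos (real (b - a) * (2*pi/real n)) = 1" by (metis cis.sel(1) one_complex.sel(1))
    then obtain m :: int where m: "real (b - a) * (2*pi/real n) = m * 2 * pi"
      by (auto simp: cos_one_2pi_int)
    then have "pi * (2 * real (b - a)) = pi * (2 * (m * n))" using ab by (simp add: field_simps)
    then have "real (b - a) = m * n" by simp
    then have e1: "int (b - a) = m * int n" by (metis of_int_eq_iff of_int_mult of_int_of_nat_eq)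
    have e2: "0 < int (b - a)" "int (b - a) < int n" using ab by auto
    have False
    proof -
      have h1: "m \<le> 0 \<Longrightarrow> m * int n \<le> 0" by (simp add: mult_nonpos_nonneg)
      have h2: "1 \<le> m \<Longrightarrow> 1 * int n \<le> m * int n" by (rule mult_right_mono) auto
      show ?thesis using h1 h2 e1 e2 by linarith
    qed }
  then show False using assms ne by (metis linorder_neqE_nat)
qed



lemma valid_mono: "valid k lam n z \<Longrightarrow> m \<le> n \<Longrightarrow> valid k lam m z"
  unfolding valid_def by auto

lemma valid_upd:
  assumes "valid k lam n z" "c \<noteq> 0" "c ^ k n = (\<Prod>m<n. z m ^ lam n m)"
  shows "valid k lam (Suc n) (z(n := c))"
  unfolding valid_def
proof (intro allI impI)
  fix l assume l: "l < Suc n"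
  show "(z(n := c)) l \<noteq> 0 \<and> (z(n := c)) l ^ k l = (\<Prod>m<l. (z(n := c)) m ^ lam l m)"
  proof (cases "l = n")
    case True
    then show ?thesis using assms by (auto intro!: prod.cong)
  next
    case False
    then have "l < n" using l by auto
    then show ?thesis using assms(1) unfolding valid_def by (auto intro!: prod.cong)
  qed
qed

lemma valid_nz: "valid k lam n z \<Longrightarrow> l < n \<Longrightarrow> z l \<noteq> 0"
  unfolding valid_def by auto

lemma valid_extend:
  assumes "\<forall>l<N. 0 < k l"
  shows "valid k lam n z \<Longrightarrow> n \<le> N \<Longrightarrow> \<exists>z'. valid k lam N z' \<and> (\<forall>l<n. z' l = z l)"
  using assms
proof (induction N)
  case 0
  then show ?case by (intro exI[of _ z]) auto
next
  case (Suc N)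
  show ?case
  proof (cases "n = Suc N")
    case True
    then show ?thesis using Suc by auto
  next
    case False
    then obtain z' where z': "valid k lam N z'" "\<forall>l<n. z' l = z l" using Suc by auto
    have P: "(\<Prod>m<N. z' m ^ lam N m) \<noteq> 0" using valid_nz[OF z'(1)] by auto
    have kN: "0 < k N" using Suc.prems by auto
    obtain c where c: "c \<noteq> 0" "c ^ k N = (\<Prod>m<N. z' m ^ lam N m)"
      using croot[OF kN P] by blast
    have v: "valid k lam (Suc N) (z'(N := c))" using valid_upd[OF z'(1) c] .
    have "\<forall>l<n. (z'(N := c)) l = z l" using z'(2) False Suc.prems by auto
    then show ?thesis using v by blast
  qed
qed

lemma Zcancel:
  fixes z :: "nat \<Rightarrow> complex"
  shows "(\<forall>l<t. z l \<noteq> 0) \<Longrightarrow> m \<le> t \<Longrightarrow> (\<forall>l. m \<le> l \<and> l < t \<longrightarrow> j l = j' l) \<Longrightarrow>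
    (\<Prod>l<t. z l ^ j l) = (\<Prod>l<t. z l ^ j' l) \<Longrightarrow> (\<Prod>l<m. z l ^ j l) = (\<Prod>l<m. z l ^ j' l)"
proof (induction t)
  case 0
  then show ?case by simp
next
  case (Suc n)
  show ?case
  proof (cases "m = Suc n")
    case True
    then show ?thesis using Suc by simp
  next
    case False
    then have "m \<le> n" using Suc by auto
    have "j n = j' n" using Suc.prems \<open>m \<le> n\<close> by auto
    moreover have zn: "z n \<noteq> 0" using Suc.prems by auto
    ultimately have "(\<Prod>l<n. z l ^ j l) = (\<Prod>l<n. z l ^ j' l)"
      using Suc.prems(4) by (simp add: lessThan_Suc zn)
    then show ?thesis using Suc \<open>m \<le> n\<close> by auto
  qed
qed

lemma separation:
  assumes k: "\<forall>l<t. 0 < k l" and bj: "\<forall>l<t. j l < k l" and bj': "\<forall>l<t. j' l < k l"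
    and eq: "\<forall>z. valid k lam t z \<longrightarrow> (\<Prod>l<t. z l ^ j l) = (\<Prod>l<t. z l ^ j' l)"
  shows "\<forall>l<t. j l = j' l"
proof (rule ccontr)
  assume nt: "\<not> (\<forall>l<t. j l = j' l)"
  define D where "D = {l. l < t \<and> j l \<noteq> j' l}"
  have Dne: "D \<noteq> {}" and Dfin: "finite D" using nt unfolding D_def by auto
  define i where "i = Max D"
  have iD: "i \<in> D" using Dne Dfin i_def by auto
  then have it: "i < t" and ne: "j i \<noteq> j' i" unfolding D_def by auto
  have above: "\<forall>l. Suc i \<le> l \<and> l < t \<longrightarrow> j l = j' l"
  proof (intro allI impI)
    fix l assume "Suc i \<le> l \<and> l < t"
    then have "l \<notin> D" using Max_ge[OF Dfin] i_def by fastforce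
    then show "j l = j' l" using \<open>Suc i \<le> l \<and> l < t\<close> unfolding D_def by auto
  qed
  have "valid k lam 0 (\<lambda>_. 1)" by (simp add: valid_def)
  then obtain z0 where z0: "valid k lam i z0"
    using valid_extend[of i k lam 0] k it by auto
  have P: "(\<Prod>m<i. z0 m ^ lam i m) \<noteq> 0" using valid_nz[OF z0] by auto
  have ki: "0 < k i" using k it by auto
  obtain c where c: "c \<noteq> 0" "c ^ k i = (\<Prod>m<i. z0 m ^ lam i m)"
    using croot[OF ki P] by blast
  define \<omega> where "\<omega> = cis (2 * pi / real (k i))"
  have \<omega>k: "\<omega> ^ k i = 1" unfolding \<omega>_def DeMoivre using k it by simp
  have \<omega>0: "\<omega> \<noteq> 0" unfolding \<omega>_def by (simp add: cis_neq_zero)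
  have c2: "\<omega> * c \<noteq> 0" "(\<omega> * c) ^ k i = (\<Prod>m<i. z0 m ^ lam i m)"
    using c \<omega>k \<omega>0 by (auto simp: power_mult_distrib)
  define A where "A = (\<Prod>l<i. z0 l ^ j l)"
  define B where "B = (\<Prod>l<i. z0 l ^ j' l)"
  have AB: "A \<noteq> 0" "B \<noteq> 0" unfolding A_def B_def using valid_nz[OF z0] by auto
  have key: "A * d ^ j i = B * d ^ j' i" if d: "d \<noteq> 0" "d ^ k i = (\<Prod>m<i. z0 m ^ lam i m)" for d
  proof -
    obtain w where w: "valid k lam t w" "\<forall>l<Suc i. w l = (z0(i := d)) l"
      using valid_extend[OF _ valid_upd[OF z0 d]] k it by (metis Suc_leI)
    have "(\<Prod>l<Suc i. w l ^ j l) = (\<Prod>l<Suc i. w l ^ j' l)"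
      using Zcancel[of t w "Suc i" j j'] eq w(1) valid_nz[OF w(1)] above it by auto
    moreover have "(\<Prod>l<i. w l ^ j l) = A" "(\<Prod>l<i. w l ^ j' l) = B" "w i = d"
      unfolding A_def B_def using w(2) by (auto intro!: prod.cong)
    ultimately show ?thesis by (simp add: lessThan_Suc mult.commute)
  qed
  have k1: "A * c ^ j i = B * c ^ j' i" using key[OF c] .
  have k2: "A * (\<omega> * c) ^ j i = B * (\<omega> * c) ^ j' i" using key[OF c2] .
  have X: "A * c ^ j i \<noteq> 0" using AB c by auto
  have "\<omega> ^ j i * (A * c ^ j i) = A * (\<omega> * c) ^ j i" by (simp add: power_mult_distrib)
  also have "\<dots> = B * (\<omega> * c) ^ j' i" using k2 .
  also have "\<dots> = \<omega> ^ j' i * (B * c ^ j' i)" by (simp add: power_mult_distrib)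
  also have "\<dots> = \<omega> ^ j' i * (A * c ^ j i)" using k1 by simp
  finally have "\<omega> ^ j i * (A * c ^ j i) = \<omega> ^ j' i * (A * c ^ j i)" .
  then have "\<omega> ^ j i = \<omega> ^ j' i" using X mult_right_cancel by blast
  then have "j i = j' i" using prim_root[of "k i" "j i" "j' i"] k bj bj' it unfolding \<omega>_def by auto
  then show False using ne by simp
qed



locale tri = comm_group G for G :: "('g, 'b) monoid_scheme" (structure) +
  fixes a :: "nat \<Rightarrow> 'g" and t :: nat and k :: "nat \<Rightarrow> nat" and lam :: "nat \<Rightarrow> nat \<Rightarrow> nat"
  assumes fin: "finite (carrier G)"
    and a_in: "a ` {..<t} \<subseteq> carrier G"
    and gen: "generate G (a ` {..<t}) = carrier G"
    and rel: "\<forall>i<t. a i [^] k i = (\<Otimes>j\<in>{..<i}. a j [^] lam i j)"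
    and minimal: "\<forall>i<t. 2 \<le> k i \<and> a i [^] k i \<in> generate G (a ` {..<i})
                     \<and> (\<forall>n::nat. 0 < n \<and> n < k i \<longrightarrow> a i [^] n \<notin> generate G (a ` {..<i}))"
begin

definition P :: "(nat \<Rightarrow> nat) \<Rightarrow> nat \<Rightarrow> 'g" where
  "P e n = (\<Otimes>l\<in>{..<n}. a l [^] e l)"

lemma a_c: "l < t \<Longrightarrow> a l \<in> carrier G" using a_in by auto

lemma Pi_c: "n \<le> t \<Longrightarrow> (\<lambda>l. a l [^] (e::nat\<Rightarrow>nat) l) \<in> {..<n} \<rightarrow> carrier G"
proof (rule Pi_I)
  fix x assume "n \<le> t" "x \<in> {..<n}"
  then have "x < t" by auto
  then show "a x [^] e x \<in> carrier G" using a_c by simp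
qed

lemma P_c: "n \<le> t \<Longrightarrow> P e n \<in> carrier G"
  unfolding P_def using Pi_c by (intro finprod_closed) auto

lemma P_0: "P e 0 = \<one>" by (simp add: P_def)

lemma P_Suc: "n < t \<Longrightarrow> P e (Suc n) = P e n \<otimes> a n [^] e n"
  unfolding P_def lessThan_Suc using Pi_c[of n e] a_c[of n]
  by (subst finprod_insert) (auto intro: m_comm)

lemma P_cong: "n \<le> t \<Longrightarrow> (\<forall>l<n. e l = f l) \<Longrightarrow> P e n = P f n"
  unfolding P_def using Pi_c[of n f] by (intro finprod_cong') auto

lemma P_add: "n \<le> t \<Longrightarrow> P (\<lambda>l. e l + f l) n = P e n \<otimes> P f n"
proof -
  assume n: "n \<le> t"
  have "P (\<lambda>l. e l + f l) n = (\<Otimes>l\<in>{..<n}. a l [^] e l \<otimes> a l [^] f l)"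
    unfolding P_def using n a_c by (intro finprod_cong') (auto simp: nat_pow_mult)
  also have "\<dots> = P e n \<otimes> P f n"
    unfolding P_def using Pi_c[OF n] by (intro finprod_multf) auto
  finally show ?thesis .
qed

lemma P_mult: "n \<le> t \<Longrightarrow> P (\<lambda>l. q * e l) n = P e n [^] q"
proof (induction n)
  case 0
  then show ?case by (simp add: P_0)
next
  case (Suc n)
  then have n: "n < t" by auto
  have "P (\<lambda>l. q * e l) (Suc n) = P e n [^] q \<otimes> (a n [^] e n) [^] q"
    using Suc n a_c[OF n] by (simp add: P_Suc nat_pow_pow mult.commute)
  also have "\<dots> = P e (Suc n) [^] q"
    using n a_c[OF n] P_c[of n e] by (simp add: P_Suc nat_pow_distrib)
  finally show ?case .
qed

lemma P_zero_exp: "n \<le> t \<Longrightarrow> P (\<lambda>_. 0) n = \<one>"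
  by (induction n) (simp_all add: P_0 P_Suc)

lemma P_delta: "n \<le> t \<Longrightarrow> P (\<lambda>m. if m = l then c else 0) n = (if l < n then a l [^] c else \<one>)"
proof (induction n)
  case 0
  then show ?case by (simp add: P_0)
next
  case (Suc n)
  then have n: "n < t" by auto
  show ?case using Suc n a_c[OF n] by (auto simp: P_Suc a_c less_Suc_eq)
qed

lemma pow_gen: "x \<in> generate G H \<Longrightarrow> x [^] (m::nat) \<in> generate G H"
  by (induction m) (auto intro: generate.one generate.eng)

lemma P_gen: "n \<le> t \<Longrightarrow> P e n \<in> generate G (a ` {..<n})"
proof (induction n)
  case 0
  then show ?case by (simp add: P_0 generate.one)
next
  case (Suc n)
  then have n: "n < t" by auto
  have sub: "a ` {..<n} \<subseteq> a ` {..<Suc n}" by auto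
  have "P e n \<in> generate G (a ` {..<Suc n})"
    using Suc mono_generate[OF sub] by auto
  moreover have "a n [^] e n \<in> generate G (a ` {..<Suc n})"
    by (rule pow_gen) (auto intro: generate.incl)
  ultimately show ?case using n by (simp add: P_Suc generate.eng)
qed

definition M :: "(nat \<Rightarrow> nat) \<Rightarrow> nat \<Rightarrow> rpoly" where
  "M e n = (\<Prod>l<n. mvar l ^ e l)"

lemma M_Suc: "M e (Suc n) = M e n * mvar n ^ e n"
  by (simp add: M_def lessThan_Suc mult.commute)

lemma M_cong: "(\<forall>l<n. e l = f l) \<Longrightarrow> M e n = M f n"
  unfolding M_def by (auto intro: prod.cong)

lemma M_add: "M (\<lambda>l. e l + f l) n = M e n * M f n"
  unfolding M_def by (simp add: power_add prod.distrib)

lemma M_mult: "M (\<lambda>l. q * e l) n = M e n ^ q"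
proof -
  have "(\<Prod>l<n. mvar l ^ (q * e l)) = (\<Prod>l<n. (mvar l ^ e l) ^ q)"
    by (rule prod.cong) (simp_all add: power_mult[symmetric] mult.commute)
  then show ?thesis by (simp add: M_def prod_power_distrib)
qed

lemma red:
  "n \<le> t \<Longrightarrow> \<exists>r. (\<forall>l<n. r l < k l) \<and> cg t k lam (M e n) (M r n) \<and> P e n = P r n"
proof (induction n arbitrary: e)
  case 0
  then show ?case by (intro exI[of _ e]) (simp add: cg_refl)
next
  case (Suc n)
  then have n: "n < t" by auto
  have kpos: "0 < k n" using minimal n by fastforce
  define q where "q = e n div k n"
  define s where "s = e n mod k n"
  have es: "e n = k n * q + s" unfolding q_def s_def by simp
  have s: "s < k n" unfolding s_def using kpos by simp
  define e' where "e' = (\<lambda>l. e l + q * lam n l)"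
  obtain r where r: "\<forall>l<n. r l < k l" "cg t k lam (M e' n) (M r n)" "P e' n = P r n"
    using Suc.IH[of e'] n by auto
  define r' where "r' = r(n := s)"
  have Mr': "M r' (Suc n) = M r n * mvar n ^ s"
    unfolding r'_def M_Suc by (simp add: M_cong)
  have Pr': "P r' (Suc n) = P r n \<otimes> a n [^] s"
    unfolding r'_def using n P_cong[of n "r(n:=s)" r] by (simp add: P_Suc)
  have "M e (Suc n) = M e n * (mvar n ^ k n) ^ q * mvar n ^ s"
    by (simp add: M_Suc es power_add power_mult mult.assoc)
  moreover have "cg t k lam (M e n * (mvar n ^ k n) ^ q * mvar n ^ s)
                    (M e n * (\<Prod>j<n. mvar j ^ lam n j) ^ q * mvar n ^ s)"
    by (intro cg_mult cg_power cg_gen cg_refl n)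
  moreover have "M e n * (\<Prod>j<n. mvar j ^ lam n j) ^ q = M e' n"
    unfolding e'_def M_add M_mult by (simp add: M_def)
  ultimately have c1: "cg t k lam (M e (Suc n)) (M e' n * mvar n ^ s)" by simp
  have c2: "cg t k lam (M e' n * mvar n ^ s) (M r' (Suc n))"
    unfolding Mr' by (intro cg_mult r cg_refl)
  have an: "a n \<in> carrier G" using a_c n by auto
  have "P e (Suc n) = P e n \<otimes> (a n [^] k n) [^] q \<otimes> a n [^] s"
    using n an P_c[of n e] by (simp add: P_Suc es nat_pow_pow m_assoc nat_pow_mult[symmetric])
  also have "\<dots> = P e n \<otimes> P (lam n) n [^] q \<otimes> a n [^] s"
    using rel n by (simp add: P_def)
  also have "\<dots> = P e' n \<otimes> a n [^] s"
    unfolding e'_def using n by (simp add: P_add P_mult)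
  also have "\<dots> = P r' (Suc n)" using r(3) Pr' by simp
  finally have "P e (Suc n) = P r' (Suc n)" .
  moreover have "\<forall>l<Suc n. r' l < k l" using r(1) s unfolding r'_def by (auto simp: less_Suc_eq)
  ultimately show ?case using cg_trans[OF c1 c2] by blast
qed

end


context tri begin

lemma gen_sub: "n \<le> t \<Longrightarrow> subgroup (generate G (a ` {..<n})) G"
  by (rule generate_is_subgroup) (use a_c in auto)

lemma nogo:
  assumes n: "n < t" and x: "x \<in> generate G (a ` {..<n})" and y: "y \<in> generate G (a ` {..<n})"
    and uv: "u < v" "v < k n" and eq: "x \<otimes> a n [^] u = y \<otimes> a n [^] v"
  shows False
proof -
  interpret H: subgroup "generate G (a ` {..<n})" G using gen_sub n by auto
  have xc: "x \<in> carrier G" and yc: "y \<in> carrier G" using x y by auto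
  have an: "a n \<in> carrier G" using a_c n by auto
  have "a n [^] v = a n [^] (v - u) \<otimes> a n [^] u"
    using uv an by (simp add: nat_pow_mult)
  then have "x \<otimes> a n [^] u = (y \<otimes> a n [^] (v - u)) \<otimes> a n [^] u"
    using eq xc yc an by (simp add: m_assoc)
  then have "x = y \<otimes> a n [^] (v - u)" using xc yc an by simp
  then have "a n [^] (v - u) = inv y \<otimes> x" using xc yc an inv_solve_left by auto
  moreover have "inv y \<otimes> x \<in> generate G (a ` {..<n})" using x y by auto
  ultimately have "a n [^] (v - u) \<in> generate G (a ` {..<n})" by simp
  moreover have "0 < v - u" "v - u < k n" using uv by auto
  ultimately show False using minimal n by blast
qed

lemma P_inj:
  "n \<le> t \<Longrightarrow> \<forall>l<n. j l < k l \<Longrightarrow> \<forall>l<n. j' l < k l \<Longrightarrow> P j n = P j' n \<Longrightarrow> \<forall>l<n. j l = j' l"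
proof (induction n)
  case 0
  then show ?case by simp
next
  case (Suc n)
  then have n: "n < t" by auto
  have an: "a n \<in> carrier G" using a_c n by auto
  have eq: "P j n \<otimes> a n [^] j n = P j' n \<otimes> a n [^] j' n" using Suc.prems n by (simp add: P_Suc)
  have g1: "P j n \<in> generate G (a ` {..<n})" "P j' n \<in> generate G (a ` {..<n})"
    using P_gen n by auto
  have jn: "j n = j' n"
  proof (rule ccontr)
    assume "j n \<noteq> j' n"
    then consider "j n < j' n" | "j' n < j n" by linarith
    then show False
    proof cases
      case 1 then show False using nogo[OF n g1(1) g1(2) 1 _ eq] Suc.prems by auto
    next
      case 2 then show False using nogo[OF n g1(2) g1(1) 2 _ eq[symmetric]] Suc.prems by auto
    qed
  qed
  then have "P j n = P j' n" using eq an P_c[of n j] P_c[of n j'] n by simp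
  then have "\<forall>l<n. j l = j' l" using Suc n by auto
  then show ?case using jn by (auto simp: less_Suc_eq)
qed

lemma surj_P: "g \<in> carrier G \<Longrightarrow> \<exists>e. g = P e t"
proof -
  assume "g \<in> carrier G"
  then have "g \<in> generate G (a ` {..<t})" using gen by simp
  then show ?thesis
  proof (induction rule: generate.induct)
    case one
    then show ?case using P_zero_exp[of t] by (intro exI[of _ "\<lambda>_. 0"]) auto
  next
    case (incl h)
    then obtain l where l: "l < t" "h = a l" by auto
    then show ?case using P_delta[of t l 1] a_c by (intro exI[of _ "\<lambda>m. if m = l then 1 else 0"]) auto
  next
    case (inv h)
    then obtain l where l: "l < t" "h = a l" by auto
    have al: "a l \<in> carrier G" using a_c l by auto
    have "order G \<noteq> 0" using fin by (simp add: order_gt_0_iff_finite[symmetric])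
    then obtain o' where o': "order G = Suc o'" using not0_implies_Suc by blast
    have "a l \<otimes> a l [^] o' = \<one>" using pow_order_eq_1[OF al] o' al by (simp add: m_comm)
    then have "inv (a l) = a l [^] o'" using al by (simp add: inv_char m_comm)
    then show ?case using P_delta[of t l o'] l by (intro exI[of _ "\<lambda>m. if m = l then o' else 0"]) auto
  next
    case (eng h1 h2)
    then obtain e1 e2 where "h1 = P e1 t" "h2 = P e2 t" by auto
    then show ?case using P_add[of t e1 e2] by (intro exI[of _ "\<lambda>l. e1 l + e2 l"]) auto
  qed
qed

end


context tri begin

lemma kpos: "l < t \<Longrightarrow> 0 < k l" using minimal by fastforce

lemma mono_M: "mono t j = M j t" by (simp add: mono_def M_def)

lemma cls_inj:
  assumes bj: "\<forall>l<t. j l < k l" and bj': "\<forall>l<t. j' l < k l"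
    and eq: "cls t k lam (mono t j) = cls t k lam (mono t j')"
  shows "\<forall>l<t. j l = j' l"
proof -
  have "mono t j' \<in> cls t k lam (mono t j)" using eq cls_mem by auto
  then have c: "cg t k lam (mono t j) (mono t j')" by (rule cls_memD)
  have "\<forall>z. valid k lam t z \<longrightarrow> (\<Prod>l<t. z l ^ j l) = (\<Prod>l<t. z l ^ j' l)"
  proof (intro allI impI)
    fix z assume "valid k lam t z"
    from ev_cg[OF this c] show "(\<Prod>l<t. z l ^ j l) = (\<Prod>l<t. z l ^ j' l)"
      unfolding ev_mono .
  qed
  moreover have "\<forall>l<t. 0 < k l" using kpos by blast
  ultimately show ?thesis using separation[of t k j j' lam] bj bj' by blast
qed

definition Psi :: "rpoly set \<Rightarrow> 'g" where
  "Psi U = P (SOME j. (\<forall>l<t. j l < k l) \<and> U = cls t k lam (mono t j)) t"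

lemma Psi_cls: "\<forall>l<t. j l < k l \<Longrightarrow> Psi (cls t k lam (mono t j)) = P j t"
proof -
  assume bj: "\<forall>l<t. j l < k l"
  let ?Q = "\<lambda>j'. (\<forall>l<t. j' l < k l) \<and> cls t k lam (mono t j) = cls t k lam (mono t j')"
  have Qj: "?Q j" using bj by simp
  have "?Q (SOME j'. ?Q j')" by (rule someI[of ?Q j, OF Qj])
  then have "\<forall>l<t. j l = (SOME j'. ?Q j') l" using cls_inj[OF bj] by blast
  then show ?thesis unfolding Psi_def using P_cong[of t j "SOME j'. ?Q j'"] by simp
qed

lemma carrier_Gamma: "carrier (Gamma t k lam) = {cls t k lam (mono t j) | j. \<forall>l<t. j l < k l}"
  by (simp add: Gamma_def)

lemma mult_Gamma: "U \<otimes>\<^bsub>Gamma t k lam\<^esub> V = cls t k lam ((SOME p. p \<in> U) * (SOME q. q \<in> V))"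
  by (simp add: Gamma_def)

lemma one_Gamma: "\<one>\<^bsub>Gamma t k lam\<^esub> = cls t k lam 1"
  by (simp add: Gamma_def)

lemma Gamma_mult:
  assumes bj: "\<forall>l<t. j l < k l" and bj': "\<forall>l<t. j' l < k l"
  shows "\<exists>r. (\<forall>l<t. r l < k l) \<and>
     cls t k lam (mono t j) \<otimes>\<^bsub>Gamma t k lam\<^esub> cls t k lam (mono t j') = cls t k lam (mono t r) \<and>
     P r t = P j t \<otimes> P j' t"
proof -
  let ?U = "cls t k lam (mono t j)" and ?V = "cls t k lam (mono t j')"
  have p: "(SOME p. p \<in> ?U) \<in> ?U" by (rule someI, rule cls_mem)
  have q: "(SOME p. p \<in> ?V) \<in> ?V" by (rule someI, rule cls_mem)
  have c1: "cg t k lam ((SOME p. p \<in> ?U) * (SOME q. q \<in> ?V)) (mono t j * mono t j')"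
    using cls_memD[OF p] cls_memD[OF q] by (intro cg_mult) (auto intro: cg_sym)
  have mm: "mono t j * mono t j' = M (\<lambda>l. j l + j' l) t" by (simp add: mono_M M_add)
  obtain r where r: "\<forall>l<t. r l < k l" "cg t k lam (M (\<lambda>l. j l + j' l) t) (M r t)"
      "P (\<lambda>l. j l + j' l) t = P r t"
    using red[of t "\<lambda>l. j l + j' l"] by auto
  have "cg t k lam ((SOME p. p \<in> ?U) * (SOME q. q \<in> ?V)) (mono t r)"
    using cg_trans[OF c1[unfolded mm] r(2)] by (simp add: mono_M)
  then have "?U \<otimes>\<^bsub>Gamma t k lam\<^esub> ?V = cls t k lam (mono t r)"
    unfolding mult_Gamma by (rule cls_eq)
  moreover have "P r t = P j t \<otimes> P j' t" using r(3) P_add[of t j j'] by simp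
  ultimately show ?thesis using r(1) by blast
qed

lemma Psi_hom: "Psi \<in> hom (Gamma t k lam) G"
proof (rule homI)
  fix x assume "x \<in> carrier (Gamma t k lam)"
  then obtain j where "\<forall>l<t. j l < k l" "x = cls t k lam (mono t j)" by (auto simp: carrier_Gamma)
  then show "Psi x \<in> carrier G" by (simp add: Psi_cls P_c)
next
  fix x y assume "x \<in> carrier (Gamma t k lam)" "y \<in> carrier (Gamma t k lam)"
  then obtain j j' where j: "\<forall>l<t. j l < k l" "x = cls t k lam (mono t j)"
      and j': "\<forall>l<t. j' l < k l" "y = cls t k lam (mono t j')" by (auto simp: carrier_Gamma)
  obtain r where "\<forall>l<t. r l < k l"
     "cls t k lam (mono t j) \<otimes>\<^bsub>Gamma t k lam\<^esub> cls t k lam (mono t j') = cls t k lam (mono t r)"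
     "P r t = P j t \<otimes> P j' t" using Gamma_mult[OF j(1) j'(1)] by blast
  then show "Psi (x \<otimes>\<^bsub>Gamma t k lam\<^esub> y) = Psi x \<otimes> Psi y"
    using j j' by (simp add: Psi_cls)
qed

lemma Gamma_closed:
  "x \<in> carrier (Gamma t k lam) \<Longrightarrow> y \<in> carrier (Gamma t k lam) \<Longrightarrow> x \<otimes>\<^bsub>Gamma t k lam\<^esub> y \<in> carrier (Gamma t k lam)"
proof -
  assume "x \<in> carrier (Gamma t k lam)" "y \<in> carrier (Gamma t k lam)"
  then obtain j j' where j: "\<forall>l<t. j l < k l" "x = cls t k lam (mono t j)"
      and j': "\<forall>l<t. j' l < k l" "y = cls t k lam (mono t j')" by (auto simp: carrier_Gamma)
  then show ?thesis using Gamma_mult[OF j(1) j'(1)] by (auto simp: carrier_Gamma)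
qed

lemma Psi_inj: "inj_on Psi (carrier (Gamma t k lam))"
proof (rule inj_onI)
  fix x y assume "x \<in> carrier (Gamma t k lam)" "y \<in> carrier (Gamma t k lam)" "Psi x = Psi y"
  then obtain j j' where j: "\<forall>l<t. j l < k l" "x = cls t k lam (mono t j)"
      and j': "\<forall>l<t. j' l < k l" "y = cls t k lam (mono t j')" and e: "Psi x = Psi y"
    by (auto simp: carrier_Gamma)
  have "P j t = P j' t" using e j j' by (simp add: Psi_cls)
  then have "\<forall>l<t. j l = j' l" using P_inj[of t j j'] j j' by auto
  then have "mono t j = mono t j'" by (simp add: mono_M M_cong)
  then show "x = y" using j j' by simp
qed

lemma Psi_surj: "Psi ` carrier (Gamma t k lam) = carrier G"
proof
  show "Psi ` carrier (Gamma t k lam) \<subseteq> carrier G" using Psi_hom by (auto simp: hom_def)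
next
  show "carrier G \<subseteq> Psi ` carrier (Gamma t k lam)"
  proof
    fix g assume "g \<in> carrier G"
    then obtain e where "g = P e t" using surj_P by auto
    moreover obtain r where "\<forall>l<t. r l < k l" "P e t = P r t" using red[of t e] by auto
    ultimately show "g \<in> Psi ` carrier (Gamma t k lam)"
      by (auto simp: carrier_Gamma Psi_cls intro!: image_eqI[of _ _ "cls t k lam (mono t r)"])
  qed
qed

lemma one_in: "\<one>\<^bsub>Gamma t k lam\<^esub> \<in> carrier (Gamma t k lam)"
  and Psi_one: "Psi (\<one>\<^bsub>Gamma t k lam\<^esub>) = \<one>"
proof -
  have m0: "mono t (\<lambda>_. 0) = 1" by (simp add: mono_def)
  have b0: "\<forall>l<t. (0::nat) < k l" using kpos by auto
  show "\<one>\<^bsub>Gamma t k lam\<^esub> \<in> carrier (Gamma t k lam)"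
    unfolding one_Gamma carrier_Gamma using b0 m0 by (auto intro!: exI[of _ "\<lambda>_. 0"])
  show "Psi (\<one>\<^bsub>Gamma t k lam\<^esub>) = \<one>"
    unfolding one_Gamma using Psi_cls[of "\<lambda>_. 0"] b0 m0 P_zero_exp[of t] by simp
qed

lemma Gamma_group: "group (Gamma t k lam)"
proof (rule groupI)
  let ?H = "Gamma t k lam"
  note hom = hom_mult[OF Psi_hom]
  note inj = inj_onD[OF Psi_inj]
  have Hc: "\<And>x. x \<in> carrier ?H \<Longrightarrow> Psi x \<in> carrier G" using Psi_hom by (auto simp: hom_def)
  show "\<And>x y. x \<in> carrier ?H \<Longrightarrow> y \<in> carrier ?H \<Longrightarrow> x \<otimes>\<^bsub>?H\<^esub> y \<in> carrier ?H"
    by (rule Gamma_closed)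
  show "\<one>\<^bsub>?H\<^esub> \<in> carrier ?H" by (rule one_in)
  show "(x \<otimes>\<^bsub>?H\<^esub> y) \<otimes>\<^bsub>?H\<^esub> z = x \<otimes>\<^bsub>?H\<^esub> (y \<otimes>\<^bsub>?H\<^esub> z)"
    if "x \<in> carrier ?H" "y \<in> carrier ?H" "z \<in> carrier ?H" for x y z
    using that by (intro inj) (simp_all add: hom Gamma_closed Hc m_assoc)
  show "\<one>\<^bsub>?H\<^esub> \<otimes>\<^bsub>?H\<^esub> x = x" if "x \<in> carrier ?H" for x
    using that by (intro inj) (simp_all add: hom Gamma_closed Hc one_in Psi_one)
  show "\<exists>y\<in>carrier ?H. y \<otimes>\<^bsub>?H\<^esub> x = \<one>\<^bsub>?H\<^esub>" if x: "x \<in> carrier ?H" for x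
  proof -
    have "inv (Psi x) \<in> carrier G" using Hc x by auto
    then obtain y where y: "y \<in> carrier ?H" "Psi y = inv (Psi x)" using Psi_surj by force
    have "y \<otimes>\<^bsub>?H\<^esub> x = \<one>\<^bsub>?H\<^esub>"
      using x y by (intro inj) (simp_all add: hom Gamma_closed Hc one_in Psi_one)
    then show ?thesis using y by blast
  qed
qed

end

theorem mainTheorem3:
  fixes G (structure)
    and a :: "nat \<Rightarrow> 'g" and t :: nat and k :: "nat \<Rightarrow> nat" and lam :: "nat \<Rightarrow> nat \<Rightarrow> nat"
  assumes "comm_group G"
    and "finite (carrier G)"
    and "a ` {..<t} \<subseteq> carrier G"
    and "generate G (a ` {..<t}) = carrier G"
    and rel: "\<forall>i<t. a i [^] k i = (\<Otimes>j\<in>{..<i}. a j [^] lam i j)"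
    and minimal: "\<forall>i<t. 2 \<le> k i \<and> a i [^] k i \<in> generate G (a ` {..<i})
                     \<and> (\<forall>n::nat. 0 < n \<and> n < k i \<longrightarrow> a i [^] n \<notin> generate G (a ` {..<i}))"
  shows "group (Gamma t k lam) \<and>
         (\<exists>\<Psi>. \<Psi> \<in> iso (Gamma t k lam) G \<and>
              (\<forall>j :: nat \<Rightarrow> nat. (\<forall>i<t. j i < k i) \<longrightarrow>
                 \<Psi> (cls t k lam (mono t j)) = (\<Otimes>i\<in>{..<t}. a i [^] j i)))"
proof -
  interpret T: tri G a t k lam
    using assms by (simp add: tri_def tri_axioms_def)
  have "T.Psi \<in> iso (Gamma t k lam) G"
    unfolding iso_def bij_betw_def using T.Psi_hom T.Psi_inj T.Psi_surj by auto
  moreover have "\<forall>j :: nat \<Rightarrow> nat. (\<forall>i<t. j i < k i) \<longrightarrow>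
                 T.Psi (cls t k lam (mono t j)) = (\<Otimes>i\<in>{..<t}. a i [^] j i)"
    using T.Psi_cls by (simp add: T.P_def)
  ultimately show ?thesis using T.Gamma_group by blast
qed


end
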